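(* Let $B\ge 1$ be an integer and let $x,y\in[0,1]$. Define $s(x)=\mathrm{round}(Bx)\in\{0,1,\dots,B\}$ (rounding to the nearest integer), and let $\boldsymbol{\phi}(x)\in\{0,1\}^{2B}$ be the binary vector whose coordinates $s(x), s(x)+1,\dots,s(x)+B-1$ (coordinates indexed $0,\dots,2B-1$) equal $1$ and all other coordinates equal $0$; define $s(y)$ and $\boldsymbol{\phi}(y)$ in the same way. Let $t:=|x-y|$, $t_-:=\max\{0,\,t-\tfrac1B\}$ and $t_+:=\min\{1,\,t+\tfrac1B\}$. Then $$\frac{2t_-}{1+t_-}\;\le\; d_J(\boldsymbol{\phi}(x),\boldsymbol{\phi}(y))\;\le\;\frac{2t_+}{1+t_+}.$$
   Context: For binary vectors $\mathbf{a},\mathbf{b}\in\{0,1\}^{m}$ with supports $A=\{k:a_k=1\}$ and $C=\{k:b_k=1\}$ (not both empty), the Jaccard distance is $d_J(\mathbf{a},\mathbf{b})=1-\frac{|A\cap C|}{|A\cup C|}$. The map $\boldsymbol{\phi}$ is the "Binary Encoding with Padding" of a numerical value scaled to $[0,1]$: a contiguous block of $B$ ones placed inside a vector of length $2B$ at an offset proportional to the value. *)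

theory Defs
  imports Complex_Main
begin

text \<open>Binary vectors of length m are functions nat => nat with values in {0,1}
  on the coordinates 0..m-1; the support only looks at coordinates below m.\<close>
definition support :: "nat \<Rightarrow> (nat \<Rightarrow> nat) \<Rightarrow> nat set" where
  "support m a = {k. k < m \<and> a k = 1}"

definition jaccard_dist :: "nat \<Rightarrow> (nat \<Rightarrow> nat) \<Rightarrow> (nat \<Rightarrow> nat) \<Rightarrow> real" where
  "jaccard_dist m a b =
     1 - real (card (support m a \<inter> support m b)) / real (card (support m a \<union> support m b))"

text \<open>s(x) = round(B x), rounding to nearest integer (ties rounded up, as Isabelle's round).\<close>
definition s_enc :: "nat \<Rightarrow> real \<Rightarrow> nat" where
  "s_enc B x = nat (round (real B * x))"

definition phi :: "nat \<Rightarrow> real \<Rightarrow> nat \<Rightarrow> nat" where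
  "phi B x = (\<lambda>k. if k < 2 * B \<and> s_enc B x \<le> k \<and> k < s_enc B x + B then 1 else 0)"

end

theory Submission
  imports Defs
begin

lemma fmono: "0 \<le> (u::real) \<Longrightarrow> u \<le> v \<Longrightarrow> 2*u/(1+u) \<le> 2*v/(1+v)"
  by (simp add: divide_simps) (simp add: algebra_simps)

lemma s_props:
  assumes "0 \<le> x" "x \<le> 1"
  shows "s_enc B x \<le> B" "\<bar>real (s_enc B x) - real B * x\<bar> \<le> 1/2"
proof -
  have r0: "round (real B * x) \<ge> 0" using assms
    by (metis mult_nonneg_nonneg of_nat_0_le_iff round_0 round_mono)
  have r1: "round (real B * x) \<le> int B"
  proof -
    have "round (real B * x) \<le> round (real B)" using assms
      by (intro round_mono) (simp add: mult_left_le)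
    then show ?thesis by simp
  qed
  show "s_enc B x \<le> B" using r0 r1 unfolding s_enc_def by simp
  have "real (s_enc B x) = of_int (round (real B * x))" using r0 unfolding s_enc_def by simp
  then show "\<bar>real (s_enc B x) - real B * x\<bar> \<le> 1/2"
    using of_int_round_abs_le[of "real B * x"] by simp
qed

lemma supp: "a \<le> B \<Longrightarrow> support (2*B) (\<lambda>k. if k < 2 * B \<and> a \<le> k \<and> k < a + B then 1 else 0) = {a..<a+B}"
  unfolding support_def by auto

lemma jac_ab:
  assumes "a \<le> b" "b \<le> B" "B \<ge> 1" and that: "s_enc B x = a" "s_enc B y = b"
  shows "jaccard_dist (2*B) (phi B x) (phi B y) = 2 * real (b-a) / (real B + real (b-a))"
proof -
  have I: "{a..<a+B} \<inter> {b..<b+B} = {b..<a+B}" using assms by auto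
  have U: "{a..<a+B} \<union> {b..<b+B} = {a..<b+B}" using assms by auto
  have "jaccard_dist (2*B) (phi B x) (phi B y) = 1 - real (a+B-b) / real (b+B-a)"
  proof -
    have "support (2*B) (phi B x) = {a..<a+B}" unfolding phi_def that using supp assms by simp
    moreover have "support (2*B) (phi B y) = {b..<b+B}" unfolding phi_def that using supp assms by simp
    ultimately show ?thesis unfolding jaccard_dist_def by (simp only: I U card_atLeastLessThan)
  qed
  also have "\<dots> = 2 * real (b-a) / (real B + real (b-a))"
  proof -
    have e1: "real (a+B-b) = real a + real B - real b" using assms by (simp add: of_nat_diff)
    have e2: "real (b+B-a) = real b + real B - real a" using assms by (simp add: of_nat_diff)
    have e3: "real (b-a) = real b - real a" using assms by (simp add: of_nat_diff)
    have p: "real b + real B - real a > 0" using assms by simp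
    show ?thesis unfolding e1 e2 e3 using p by (simp add: field_simps)
  qed
  finally show ?thesis .
qed

theorem lemma3p1:
  fixes B :: nat and x y :: real
  assumes "B \<ge> 1" and "0 \<le> x" and "x \<le> 1" and "0 \<le> y" and "y \<le> 1"
  defines "t \<equiv> \<bar>x - y\<bar>"
  defines "tm \<equiv> max 0 (t - 1 / real B)"
  defines "tp \<equiv> min 1 (t + 1 / real B)"
  shows "2 * tm / (1 + tm) \<le> jaccard_dist (2 * B) (phi B x) (phi B y)
         \<and> jaccard_dist (2 * B) (phi B x) (phi B y) \<le> 2 * tp / (1 + tp)"
proof -
  define a where "a = s_enc B x"
  define b where "b = s_enc B y"
  have ha: "a \<le> B" "\<bar>real a - real B * x\<bar> \<le> 1/2" unfolding a_def using s_props[OF assms(2,3)] by auto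
  have hb: "b \<le> B" "\<bar>real b - real B * y\<bar> \<le> 1/2" unfolding b_def using s_props[OF assms(4,5)] by auto
  have Bp: "real B > 0" using assms(1) by simp
  define d where "d = real (max a b - min a b)"
  have J: "jaccard_dist (2 * B) (phi B x) (phi B y) = 2 * d / (real B + d)"
  proof (cases "a \<le> b")
    case True
    have "d = real (b - a)" unfolding d_def using True by (simp add: max_def min_def)
    then show ?thesis using jac_ab[OF True hb(1) assms(1) a_def[symmetric] b_def[symmetric]] by simp
  next
    case False
    have "jaccard_dist (2 * B) (phi B x) (phi B y) = jaccard_dist (2 * B) (phi B y) (phi B x)"
      unfolding jaccard_dist_def by (simp add: Int_commute Un_commute)
    moreover have "d = real (a - b)" unfolding d_def using False by (simp add: max_def min_def)
    moreover have "b \<le> a" using False by simp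
    ultimately show ?thesis using jac_ab[OF _ ha(1) assms(1) b_def[symmetric] a_def[symmetric]] by simp
  qed
  define u where "u = d / real B"
  have J2: "2 * d / (real B + d) = 2*u/(1+u)" unfolding u_def using Bp
    by (simp add: divide_simps)
  have dB: "\<bar>d - real B * t\<bar> \<le> 1"
  proof -
    have "d = \<bar>real a - real b\<bar>" unfolding d_def by (cases "a \<le> b") (simp_all add: of_nat_diff max_def min_def)
    moreover have "real B * t = \<bar>real B * x - real B * y\<bar>" unfolding t_def using Bp
      by (metis abs_mult abs_of_nat right_diff_distrib)
    ultimately show ?thesis using ha(2) hb(2) by linarith
  qed
  have d0: "0 \<le> d" "d \<le> real B" unfolding d_def using ha hb by auto
  have u1: "0 \<le> u" "u \<le> 1" unfolding u_def using d0 Bp by (auto simp: divide_simps)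
  have u2: "\<bar>u - t\<bar> \<le> 1 / real B"
  proof -
    have "u - t = (d - real B * t) / real B" unfolding u_def using Bp by (simp add: divide_simps)
    then show ?thesis using dB Bp by (simp add: abs_divide divide_right_mono)
  qed
  have "tm \<le> u" unfolding tm_def using u1 u2 by auto
  moreover have "0 \<le> tm" unfolding tm_def by simp
  moreover have "u \<le> tp" unfolding tp_def using u1 u2 by auto
  ultimately show ?thesis unfolding J J2 using fmono u1 by blast
qed

end
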